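(* Let $K\subset S^3$ be a knot and $C_0=CFK^-(K)$, viewed as a $(\mathbb{Z},U)$-filtered complex filtered by the Alexander grading $A$. Choose a horizontally simplified basis $\{x_1,\dots,x_N,y_1,\dots,y_N,z\}$ of $C_0$ over $\mathbb{F}[U]$. The $\mathbb{F}$-basis of $C_0$ then consists of the homogeneous elements $U^m w$ with $m\ge 0$ and $w$ in this basis; in particular $\partial_H(y_1)=U^{r_1}x_1$ with $r_1>0$. Define the following objects. - Let $h_1:C_0\to C_0$ be the $\mathbb{F}$-linear map with $h_1(U^{r_1+n}x_1)=U^ny_1$ for all $n\ge 0$, and $h_1=0$ on all other homogeneous basis elements. - Let $C_1$ be the $\mathbb{F}$-span of all homogeneous basis elements except $U^{r_1+n}x_1$ and $U^ny_1$ ($n\ge0$), with projection $\pi:C_0\to C_1$ and inclusion $\iota:C_1\to C_0$. - Set $\partial_1=\pi\circ(\partial+\partial h_1\partial)\circ\iota$, $U_1=\pi\circ(U+\partial h_1U)\circ\iota$, and $A_1=A\circ\iota$. Then $(C_1,\partial_1,A_1,U_1)$ is a $(\mathbb{Z},U)$-filtered chain deformation retract of $C_0$, via the maps $f_1=\pi\circ(I+\partial h_1)$ and $g_1=(I+h_1\partial)\circ\iota$.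
   Context: Coefficients are in $\mathbb{F}=\mathbb{Z}/2$. $CFK^-(K)$ is the Ozsváth–Szabó knot Floer complex. It is freely generated over $\mathbb{F}[U]$ by finitely many homogeneous generators and carries an Alexander filtration with $A(U^nx)=A(x)-n$ and $A(\sum_i y_i)=\max_i A(y_i)$ for homogeneous $y_i$. It also carries a Maslov grading, lowered by $1$ by $\partial$ and by $2$ by $U$. For a homogeneous element $w$, $\partial_H(w)$ (the horizontal differential) is the sum of the terms of $\partial w$ whose Alexander grading equals $A(w)$. A basis $\{x_i,y_i,z\}$ over $\mathbb{F}[U]$ is horizontally simplified if $\partial_H(y_i)=U^{r_i}x_i$ for some $r_i>0$ and $\partial_H(x_i)=\partial_H(z)=0$. A $\mathbb{Z}$-filtration is a function $F$ with $F(x+y)\le\max(F(x),F(y))$, $F(\partial x)\le F(x)$, and $F^{-1}(-\infty)=\{0\}$. A $(\mathbb{Z},U)$-filtered complex is a filtered complex with a specified filtered chain map $U$. $C'$ is a $(\mathbb{Z},U)$-filtered chain deformation retract of $C$ if there are filtered chain maps $f:C\to C'$ and $g:C'\to C$ satisfying: - $fg=I_{C'}$; - $gf=I+\partial h+h\partial$ for a filtered map $h$; - $fU\sim U'f$ and $gU'\sim Ug$, where $\sim$ denotes filtered chain homotopy. *)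

theory Defs
  imports Main "HOL-Library.Z2" "HOL-Library.Poly_Mapping" "HOL-Library.Option_ord"
begin

text \<open>Vector spaces over F = Z/2 are modelled by a carrier set V inside an
  abelian group type 'v (in which x + x = 0).  Over Z/2 a map is linear iff it
  is additive.  A Z-filtration takes values in int option, where None plays
  the role of minus infinity (None is the bottom element of the order).\<close>

definition subspace2 :: "'v::ab_group_add set \<Rightarrow> bool" where
  "subspace2 V \<longleftrightarrow> 0 \<in> V \<and> (\<forall>x\<in>V. \<forall>y\<in>V. x + y \<in> V)"

definition lin2 :: "'v::ab_group_add set \<Rightarrow> 'w::ab_group_add set \<Rightarrow> ('v \<Rightarrow> 'w) \<Rightarrow> bool" where
  "lin2 V W f \<longleftrightarrow> (\<forall>x\<in>V. f x \<in> W) \<and> (\<forall>x\<in>V. \<forall>y\<in>V. f (x + y) = f x + f y)"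

definition chain_complex :: "'v::ab_group_add set \<Rightarrow> ('v \<Rightarrow> 'v) \<Rightarrow> bool" where
  "chain_complex V d \<longleftrightarrow> subspace2 V \<and> lin2 V V d \<and> (\<forall>x\<in>V. d (d x) = 0)"

definition Z_filtration :: "'v::ab_group_add set \<Rightarrow> ('v \<Rightarrow> 'v) \<Rightarrow> ('v \<Rightarrow> int option) \<Rightarrow> bool" where
  "Z_filtration V d F \<longleftrightarrow>
     (\<forall>x\<in>V. \<forall>y\<in>V. F (x + y) \<le> max (F x) (F y)) \<and>
     (\<forall>x\<in>V. F (d x) \<le> F x) \<and>
     (\<forall>x\<in>V. F x = None \<longleftrightarrow> x = 0)"

definition filtered_map :: "'v set \<Rightarrow> ('v \<Rightarrow> int option) \<Rightarrow> ('w \<Rightarrow> int option) \<Rightarrow> ('v \<Rightarrow> 'w) \<Rightarrow> bool" where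
  "filtered_map V F G f \<longleftrightarrow> (\<forall>x\<in>V. G (f x) \<le> F x)"

definition filtered_chain_map ::
  "'v::ab_group_add set \<Rightarrow> ('v \<Rightarrow> 'v) \<Rightarrow> ('v \<Rightarrow> int option) \<Rightarrow>
   'w::ab_group_add set \<Rightarrow> ('w \<Rightarrow> 'w) \<Rightarrow> ('w \<Rightarrow> int option) \<Rightarrow> ('v \<Rightarrow> 'w) \<Rightarrow> bool" where
  "filtered_chain_map V d F W d' G f \<longleftrightarrow>
     lin2 V W f \<and> filtered_map V F G f \<and> (\<forall>x\<in>V. f (d x) = d' (f x))"

text \<open>Filtered chain homotopy between two maps V \<rightarrow> W (over Z/2, f - f' = f + f').\<close>
definition filtered_homotopic ::
  "'v::ab_group_add set \<Rightarrow> ('v \<Rightarrow> 'v) \<Rightarrow> ('v \<Rightarrow> int option) \<Rightarrow>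
   'w::ab_group_add set \<Rightarrow> ('w \<Rightarrow> 'w) \<Rightarrow> ('w \<Rightarrow> int option) \<Rightarrow>
   ('v \<Rightarrow> 'w) \<Rightarrow> ('v \<Rightarrow> 'w) \<Rightarrow> bool" where
  "filtered_homotopic V d F W d' G f f' \<longleftrightarrow>
     (\<exists>H. lin2 V W H \<and> filtered_map V F G H \<and>
          (\<forall>x\<in>V. f x + f' x = d' (H x) + H (d x)))"

definition ZU_filtered_complex ::
  "'v::ab_group_add set \<Rightarrow> ('v \<Rightarrow> 'v) \<Rightarrow> ('v \<Rightarrow> int option) \<Rightarrow> ('v \<Rightarrow> 'v) \<Rightarrow> bool" where
  "ZU_filtered_complex V d F U \<longleftrightarrow>
     chain_complex V d \<and> Z_filtration V d F \<and> filtered_chain_map V d F V d F U"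

definition ZU_deformation_retract ::
  "'v::ab_group_add set \<Rightarrow> ('v \<Rightarrow> 'v) \<Rightarrow> ('v \<Rightarrow> int option) \<Rightarrow> ('v \<Rightarrow> 'v) \<Rightarrow>
   'w::ab_group_add set \<Rightarrow> ('w \<Rightarrow> 'w) \<Rightarrow> ('w \<Rightarrow> int option) \<Rightarrow> ('w \<Rightarrow> 'w) \<Rightarrow>
   ('v \<Rightarrow> 'w) \<Rightarrow> ('w \<Rightarrow> 'v) \<Rightarrow> bool" where
  "ZU_deformation_retract C d F U C' d' F' U' f g \<longleftrightarrow>
     ZU_filtered_complex C d F U \<and> ZU_filtered_complex C' d' F' U' \<and>
     filtered_chain_map C d F C' d' F' f \<and> filtered_chain_map C' d' F' C d F g \<and>
     (\<forall>x\<in>C'. f (g x) = x) \<and>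
     (\<exists>h. lin2 C C h \<and> filtered_map C F F h \<and>
          (\<forall>x\<in>C. g (f x) = x + d (h x) + h (d x))) \<and>
     filtered_homotopic C d F C' d' F' (\<lambda>x. f (U x)) (\<lambda>x. U' (f x)) \<and>
     filtered_homotopic C' d' F' C d F (\<lambda>x. g (U' x)) (\<lambda>x. U (g x))"

text \<open>An element of a free F[U]-module with F[U]-basis indexed by 'g is an
  F-linear combination of the F-basis elements U^m w, encoded as (w, m).\<close>
type_synonym 'g chain = "('g \<times> nat) \<Rightarrow>\<^sub>0 bit"

definition basis_el :: "'g \<Rightarrow> nat \<Rightarrow> 'g chain" where
  "basis_el w m = Poly_Mapping.single (w, m) 1"

text \<open>F-linear extension of a map given on the F-basis (coefficients are 0 or 1).\<close>
definition lin_ext :: "('g \<times> nat \<Rightarrow> 'v::comm_monoid_add) \<Rightarrow> 'g chain \<Rightarrow> 'v" where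
  "lin_ext \<phi> c = (\<Sum>p\<in>Poly_Mapping.keys c. \<phi> p)"

definition Upow :: "nat \<Rightarrow> 'g chain \<Rightarrow> 'g chain" where
  "Upow m = lin_ext (\<lambda>(w, k). basis_el w (k + m))"

definition bdry :: "('g \<Rightarrow> 'g chain) \<Rightarrow> 'g chain \<Rightarrow> 'g chain" where
  "bdry d = lin_ext (\<lambda>(w, m). Upow m (d w))"

definition gr_el :: "('g \<Rightarrow> int) \<Rightarrow> 'g \<times> nat \<Rightarrow> int" where
  "gr_el A p = A (fst p) - int (snd p)"

definition maslov_el :: "('g \<Rightarrow> int) \<Rightarrow> 'g \<times> nat \<Rightarrow> int" where
  "maslov_el M p = M (fst p) - 2 * int (snd p)"

definition alex :: "('g \<Rightarrow> int) \<Rightarrow> 'g chain \<Rightarrow> int option" where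
  "alex A c = (if c = 0 then None else Some (Max (gr_el A ` Poly_Mapping.keys c)))"

definition horiz :: "('g \<Rightarrow> int) \<Rightarrow> ('g \<Rightarrow> 'g chain) \<Rightarrow> 'g \<Rightarrow> 'g chain" where
  "horiz A d w = (\<Sum>p\<in>Poly_Mapping.keys (d w). if gr_el A p = A w then Poly_Mapping.single p 1 else 0)"

text \<open>The data (Alexander grading A, Maslov grading M, differential d on generators)
  defines a free, finitely generated, bigraded, Alexander-filtered F[U]-complex.\<close>
definition knot_like_complex :: "('g::finite \<Rightarrow> int) \<Rightarrow> ('g \<Rightarrow> int) \<Rightarrow> ('g \<Rightarrow> 'g chain) \<Rightarrow> bool" where
  "knot_like_complex A M d \<longleftrightarrow>
     (\<forall>w. bdry d (d w) = 0) \<and>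
     (\<forall>w. \<forall>p\<in>Poly_Mapping.keys (d w). maslov_el M p = M w - 1) \<and>
     (\<forall>w. \<forall>p\<in>Poly_Mapping.keys (d w). gr_el A p \<le> A w)"

definition horiz_simplified ::
  "('g \<Rightarrow> int) \<Rightarrow> ('g \<Rightarrow> 'g chain) \<Rightarrow> nat \<Rightarrow> (nat \<Rightarrow> 'g) \<Rightarrow> (nat \<Rightarrow> 'g) \<Rightarrow> 'g \<Rightarrow> (nat \<Rightarrow> nat) \<Rightarrow> bool" where
  "horiz_simplified A d N x y z r \<longleftrightarrow>
     inj_on x {1..N} \<and> inj_on y {1..N} \<and>
     x ` {1..N} \<inter> y ` {1..N} = {} \<and> z \<notin> x ` {1..N} \<and> z \<notin> y ` {1..N} \<and>
     x ` {1..N} \<union> y ` {1..N} \<union> {z} = UNIV \<and>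
     (\<forall>i\<in>{1..N}. 0 < r i \<and> horiz A d (y i) = basis_el (x i) (r i) \<and> horiz A d (x i) = 0) \<and>
     horiz A d z = 0"


definition excl1 :: "'g \<Rightarrow> 'g \<Rightarrow> nat \<Rightarrow> ('g \<times> nat) set" where
  "excl1 x1 y1 r1 = {p. (fst p = x1 \<and> r1 \<le> snd p) \<or> fst p = y1}"

definition h1_map :: "'g \<Rightarrow> 'g \<Rightarrow> nat \<Rightarrow> 'g chain \<Rightarrow> 'g chain" where
  "h1_map x1 y1 r1 = lin_ext (\<lambda>(w, m). if w = x1 \<and> r1 \<le> m then basis_el y1 (m - r1) else 0)"

text \<open>C_1: the F-span of the remaining F-basis elements (a subspace of C_0,
  so the inclusion \<iota> is the identity on it).\<close>
definition C1_set :: "'g \<Rightarrow> 'g \<Rightarrow> nat \<Rightarrow> 'g chain set" where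
  "C1_set x1 y1 r1 = {c. Poly_Mapping.keys c \<inter> excl1 x1 y1 r1 = {}}"

definition proj1 :: "'g \<Rightarrow> 'g \<Rightarrow> nat \<Rightarrow> 'g chain \<Rightarrow> 'g chain" where
  "proj1 x1 y1 r1 = lin_ext (\<lambda>p. if p \<in> excl1 x1 y1 r1 then 0 else Poly_Mapping.single p 1)"

end

theory Submission
  imports Defs
begin

lemma bit_cases2: "(b::bit) = 0 \<or> b = 1"
  by (cases b) auto

lemma chain_add_self [simp]: "(c::'a \<Rightarrow>\<^sub>0 bit) + c = 0"
  by (rule poly_mapping_eqI) (simp add: lookup_add)

lemma chain_add_self2 [simp]: "(c::'a \<Rightarrow>\<^sub>0 bit) + (c + d) = d"
  by (simp add: add.assoc[symmetric])

lemma lin_ext_alt: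
  fixes \<phi> :: "'g \<times> nat \<Rightarrow> 'a \<Rightarrow>\<^sub>0 bit"
  assumes "finite S" "Poly_Mapping.keys c \<subseteq> S"
  shows "lin_ext \<phi> c = (\<Sum>p\<in>S. if p \<in> Poly_Mapping.keys c then \<phi> p else 0)"
proof -
  have "Poly_Mapping.keys c = {p\<in>S. p \<in> Poly_Mapping.keys c}" using assms by auto
  then show ?thesis unfolding lin_ext_def using sum.inter_filter[OF assms(1)] by metis
qed

definition additive :: "(('a \<Rightarrow>\<^sub>0 bit) \<Rightarrow> ('b \<Rightarrow>\<^sub>0 bit)) \<Rightarrow> bool" where
  "additive F \<longleftrightarrow> (\<forall>a b. F (a + b) = F a + F b)"

lemma additive_lin_ext: "additive (lin_ext (\<phi> :: 'g \<times> nat \<Rightarrow> 'a \<Rightarrow>\<^sub>0 bit))"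
  unfolding additive_def
proof (intro allI)
  fix a b :: "'g chain"
  let ?S = "Poly_Mapping.keys a \<union> Poly_Mapping.keys b"
  have f: "finite ?S" by simp
  have "lin_ext \<phi> (a + b) = (\<Sum>p\<in>?S. if p \<in> Poly_Mapping.keys (a+b) then \<phi> p else 0)"
    by (rule lin_ext_alt[OF f keys_add])
  also have "\<dots> = (\<Sum>p\<in>?S. (if p \<in> Poly_Mapping.keys a then \<phi> p else 0) + (if p \<in> Poly_Mapping.keys b then \<phi> p else 0))"
  proof (rule sum.cong[OF refl])
    fix p
    show "(if p \<in> Poly_Mapping.keys (a+b) then \<phi> p else 0) = (if p \<in> Poly_Mapping.keys a then \<phi> p else 0) + (if p \<in> Poly_Mapping.keys b then \<phi> p else 0)"
      using bit_cases2[of "Poly_Mapping.lookup a p"] bit_cases2[of "Poly_Mapping.lookup b p"]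
      by (auto simp: in_keys_iff lookup_add)
  qed
  also have "\<dots> = lin_ext \<phi> a + lin_ext \<phi> b"
    by (simp add: sum.distrib lin_ext_alt[OF f])
  finally show "lin_ext \<phi> (a + b) = lin_ext \<phi> a + lin_ext \<phi> b" .
qed

lemma additive_zero: "additive F \<Longrightarrow> F 0 = 0"
  unfolding additive_def by (metis add_cancel_right_right add_0)

lemma lin_ext_single [simp]: "lin_ext \<phi> (Poly_Mapping.single p 1) = \<phi> p"
  by (simp add: lin_ext_def)

lemma lin_ext_zero [simp]: "lin_ext \<phi> 0 = 0"
  by (simp add: lin_ext_def)

lemma chain_decomp: "(c::'a \<Rightarrow>\<^sub>0 bit) = (\<Sum>p\<in>Poly_Mapping.keys c. Poly_Mapping.single p 1)"
proof (rule poly_mapping_eqI)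
  fix q
  have "Poly_Mapping.lookup (\<Sum>p\<in>Poly_Mapping.keys c. Poly_Mapping.single p (1::bit)) q
     = (\<Sum>p\<in>Poly_Mapping.keys c. if p = q then 1 else 0)"
    by (simp add: lookup_sum lookup_single when_def)
  also have "\<dots> = Poly_Mapping.lookup c q"
    using bit_cases2[of "Poly_Mapping.lookup c q"] by (auto simp: in_keys_iff sum.delta)
  finally show "Poly_Mapping.lookup c q = Poly_Mapping.lookup (\<Sum>p\<in>Poly_Mapping.keys c. Poly_Mapping.single p 1) q" by simp
qed

lemma additive_sum: "finite S \<Longrightarrow> additive F \<Longrightarrow> F (\<Sum>p\<in>S. g p) = (\<Sum>p\<in>S. F (g p))"
  by (induction S rule: finite_induct) (auto simp: additive_zero additive_def)

lemma additive_eqI: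
  assumes "additive F" "additive G" "\<And>p. F (Poly_Mapping.single p 1) = G (Poly_Mapping.single p 1)"
  shows "F = G"
proof
  fix c
  have "F c = (\<Sum>p\<in>Poly_Mapping.keys c. F (Poly_Mapping.single p 1))"
    by (subst chain_decomp) (simp add: additive_sum[OF _ assms(1)])
  also have "\<dots> = (\<Sum>p\<in>Poly_Mapping.keys c. G (Poly_Mapping.single p 1))" using assms(3) by simp
  also have "\<dots> = G c"
    by (subst (2) chain_decomp) (simp add: additive_sum[OF _ assms(2)])
  finally show "F c = G c" .
qed

lemma additive_comp: "additive F \<Longrightarrow> additive G \<Longrightarrow> additive (\<lambda>c. F (G c))"
  by (simp add: additive_def)
lemma additive_plus: "additive F \<Longrightarrow> additive G \<Longrightarrow> additive (\<lambda>c. F c + G c)"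
  by (simp add: additive_def algebra_simps)
lemma additive_id: "additive (\<lambda>c. c)"
  by (simp add: additive_def)
lemma additive_0: "additive (\<lambda>c. 0)"
  by (simp add: additive_def)

lemma lin_ext_vanish: "(\<And>p. p \<in> Poly_Mapping.keys c \<Longrightarrow> \<phi> p = 0) \<Longrightarrow> lin_ext \<phi> c = 0"
  by (simp add: lin_ext_def)

definition restr :: "('g \<times> nat \<Rightarrow> bool) \<Rightarrow> 'g chain \<Rightarrow> 'g chain" where
  "restr P = lin_ext (\<lambda>p. if P p then Poly_Mapping.single p 1 else 0)"

lemma lookup_restr: "Poly_Mapping.lookup (restr P c) q = (if P q then Poly_Mapping.lookup c q else 0)"
proof -
  have "Poly_Mapping.lookup (restr P c) q = (\<Sum>p\<in>Poly_Mapping.keys c. Poly_Mapping.lookup (if P p then Poly_Mapping.single p (1::bit) else 0) q)"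
    by (simp add: restr_def lin_ext_def lookup_sum)
  also have "\<dots> = (\<Sum>p\<in>Poly_Mapping.keys c. if p = q \<and> P q then 1 else (0::bit))"
    by (rule sum.cong[OF refl]) (auto simp: lookup_single when_def)
  also have "\<dots> = (if P q then Poly_Mapping.lookup c q else 0)"
    using bit_cases2[of "Poly_Mapping.lookup c q"] by (auto simp: in_keys_iff sum.delta)
  finally show ?thesis .
qed

lemma keys_restr: "Poly_Mapping.keys (restr P c) = {q \<in> Poly_Mapping.keys c. P q}"
  by (auto simp: in_keys_iff lookup_restr split: if_splits)

lemma keys_lin_ext: "Poly_Mapping.keys (lin_ext (\<phi> :: 'g \<times> nat \<Rightarrow> 'a \<Rightarrow>\<^sub>0 bit) c) \<subseteq> (\<Union>p\<in>Poly_Mapping.keys c. Poly_Mapping.keys (\<phi> p))"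
proof -
  have "\<And>S. finite S \<Longrightarrow> Poly_Mapping.keys (\<Sum>p\<in>S. \<phi> p) \<subseteq> (\<Union>p\<in>S. Poly_Mapping.keys (\<phi> p))"
  proof -
    fix S :: "('g \<times> nat) set" assume "finite S"
    then show "Poly_Mapping.keys (\<Sum>p\<in>S. \<phi> p) \<subseteq> (\<Union>p\<in>S. Poly_Mapping.keys (\<phi> p))"
      by (induction S rule: finite_induct) (use keys_add in fastforce)+
  qed
  then show ?thesis unfolding lin_ext_def by simp
qed

lemma alex_le_Some: "alex A c \<le> Some B \<longleftrightarrow> (\<forall>p\<in>Poly_Mapping.keys c. gr_el A p \<le> B)"
  by (auto simp: alex_def)

lemma alex_le_None: "alex A c \<le> None \<longleftrightarrow> c = 0"
  by (auto simp: alex_def)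

lemma alex_ge: "p \<in> Poly_Mapping.keys c \<Longrightarrow> Some (gr_el A p) \<le> alex A c"
  by (auto simp: alex_def)

lemma single_one_nonzero [simp]: "Poly_Mapping.single p (1::bit) \<noteq> 0"
  by (metis lookup_single_eq lookup_zero one_neq_zero)

lemma alex_single [simp]: "alex A (Poly_Mapping.single p (1::bit)) = Some (gr_el A p)"
  by (simp add: alex_def)

lemma alex_zero [simp]: "alex A 0 = None"
  by (simp add: alex_def)

lemma alex_None_iff: "alex A c = None \<longleftrightarrow> c = 0"
  by (simp add: alex_def)

lemma alex_cases: "alex A c = None \<or> (\<exists>B. alex A c = Some B)"
  by (cases "alex A c") auto

lemma alex_add: "alex A ((a::'g chain) + b) \<le> max (alex A a) (alex A b)"
proof (cases "a = 0")
  case True then show ?thesis by simp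
next
  case a: False
  show ?thesis
  proof (cases "b = 0")
    case True then show ?thesis by simp
  next
    case b: False
    define B1 where "B1 = Max (gr_el A ` Poly_Mapping.keys a)"
    define B2 where "B2 = Max (gr_el A ` Poly_Mapping.keys b)"
    have 1: "alex A a = Some B1" using a by (simp add: alex_def B1_def)
    have 2: "alex A b = Some B2" using b by (simp add: alex_def B2_def)
    have "\<forall>p\<in>Poly_Mapping.keys (a+b). gr_el A p \<le> max B1 B2"
    proof
      fix p assume "p \<in> Poly_Mapping.keys (a+b)"
      then have "p \<in> Poly_Mapping.keys a \<or> p \<in> Poly_Mapping.keys b" using keys_add[of a b] by blast
      moreover have "\<forall>p\<in>Poly_Mapping.keys a. gr_el A p \<le> B1" using 1 alex_le_Some[of A a B1] by simp
      moreover have "\<forall>p\<in>Poly_Mapping.keys b. gr_el A p \<le> B2" using 2 alex_le_Some[of A b B2] by simp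
      ultimately show "gr_el A p \<le> max B1 B2" by (meson max.coboundedI1 max.coboundedI2)
    qed
    then have "alex A (a + b) \<le> Some (max B1 B2)" using alex_le_Some[of A "a+b" "max B1 B2"] by blast
    also have "Some (max B1 B2) = max (alex A a) (alex A b)" by (simp add: 1 2 max_def)
    finally show ?thesis .
  qed
qed

lemma alex_sum_le:
  assumes "finite K" "\<And>p. p \<in> K \<Longrightarrow> alex A (\<phi> p :: 'g chain) \<le> X"
  shows "alex A (\<Sum>p\<in>K. \<phi> p) \<le> X"
  using assms
proof (induction K rule: finite_induct)
  case empty then show ?case by simp
next
  case (insert p K)
  have "alex A (\<phi> p) \<le> X" "alex A (sum \<phi> K) \<le> X" using insert by auto
  then have "max (alex A (\<phi> p)) (alex A (sum \<phi> K)) \<le> X" by simp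
  then show ?case using alex_add[of A "\<phi> p" "sum \<phi> K"] insert(1,2) by (simp add: order_trans)
qed

lemma alex_lin_ext:
  assumes "\<And>p. alex A (\<phi> p) \<le> Some (gr_el A p)"
  shows "alex A (lin_ext \<phi> c) \<le> alex A c"
proof (cases "c = 0")
  case True then show ?thesis by simp
next
  case False
  then obtain B where B: "alex A c = Some B" by (simp add: alex_def)
  have "alex A (\<Sum>p\<in>Poly_Mapping.keys c. \<phi> p) \<le> Some B"
  proof (rule alex_sum_le)
    fix p assume "p \<in> Poly_Mapping.keys c"
    then have "gr_el A p \<le> B" using B alex_le_Some[of A c B] by auto
    then have "Some (gr_el A p) \<le> Some B" by simp
    with assms[of p] show "alex A (\<phi> p) \<le> Some B" by (rule order_trans)
  qed simp
  then show ?thesis by (simp add: lin_ext_def B)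
qed

lemma additive_eqI2:
  assumes "additive F" "additive G" "\<And>w m. F (Poly_Mapping.single (w, m) 1) = G (Poly_Mapping.single (w, m) 1)"
  shows "F = G"
proof (rule additive_eqI[OF assms(1,2)])
  fix p
  show "F (Poly_Mapping.single p 1) = G (Poly_Mapping.single p 1)" 
    apply (cases p) apply (simp only:) apply (rule assms(3)) done
qed

lemma basis_el_eq: "basis_el w m = Poly_Mapping.single (w, m) 1"
  by (simp add: basis_el_def)

lemma Upow_single [simp]: "Upow m (Poly_Mapping.single (w, k) 1) = Poly_Mapping.single (w, k + m) 1"
  by (simp add: Upow_def basis_el_def)

lemma additive_Upow: "additive (Upow m)"
  unfolding Upow_def by (rule additive_lin_ext)

lemma additive_bdry: "additive (bdry d)"
  unfolding bdry_def by (rule additive_lin_ext)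

lemma bdry_single [simp]: "bdry d (Poly_Mapping.single (w, m) 1) = Upow m (d w)"
  by (simp add: bdry_def)

lemma Upow_Upow: "Upow a (Upow b c) = Upow (b + a) c"
proof -
  have "(\<lambda>c. Upow a (Upow b c)) = Upow (b + a)"
    by (rule additive_eqI2[OF additive_comp[OF additive_Upow additive_Upow] additive_Upow]) (simp add: add.assoc)
  from fun_cong[OF this, of c] show ?thesis by simp
qed

lemma Upow_0: "Upow 0 (c::'g chain) = c"
proof -
  have "Upow 0 = (\<lambda>c::'g chain. c)"
    by (rule additive_eqI2[OF additive_Upow additive_id]) simp
  then show ?thesis using fun_cong[of "Upow 0" "\<lambda>c. c" c] by simp
qed

lemma bdry_Upow: "bdry d (Upow m c) = Upow m (bdry d c)"
proof -
  have "(\<lambda>c. bdry d (Upow m c)) = (\<lambda>c. Upow m (bdry d c))"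
    by (rule additive_eqI2[OF additive_comp[OF additive_bdry additive_Upow] additive_comp[OF additive_Upow additive_bdry]]) (simp add: Upow_Upow)
  from fun_cong[OF this, of c] show ?thesis by simp
qed

lemma keys_Upow: "p \<in> Poly_Mapping.keys (Upow m c) \<Longrightarrow> \<exists>q\<in>Poly_Mapping.keys c. p = (fst q, snd q + m)"
proof -
  assume a: "p \<in> Poly_Mapping.keys (Upow m c)"
  have "p \<in> (\<Union>q\<in>Poly_Mapping.keys c. Poly_Mapping.keys ((\<lambda>(w, k). basis_el w (k + m)) q))"
    using subsetD[OF keys_lin_ext[of "\<lambda>(w, k). basis_el w (k + m)" c]] a unfolding Upow_def .
  then obtain q where q: "q \<in> Poly_Mapping.keys c" "p \<in> Poly_Mapping.keys ((\<lambda>(w, k). basis_el w (k + m)) q)"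
    by (rule UN_E)
  obtain w k where wk: "q = (w, k)" by (cases q) simp
  have "p = (w, k + m)" using q(2) by (simp add: wk basis_el_def)
  then have "p = (fst q, snd q + m)" by (simp add: wk)
  with q(1) show ?thesis by (rule bexI[rotated])
qed

lemma alex_Upow_le: "alex A (Upow m c) \<le> alex A c"
  unfolding Upow_def
proof (rule alex_lin_ext)
  fix p :: "'a \<times> nat"
  obtain w k where p: "p = (w, k)" by (cases p) simp
  show "alex A ((\<lambda>(w, k). basis_el w (k + m)) p) \<le> Some (gr_el A p)"
    by (simp add: p basis_el_def gr_el_def)
qed

lemma alex_Upow_shift:
  assumes "\<forall>p\<in>Poly_Mapping.keys c. gr_el A p \<le> B"
  shows "alex A (Upow m c) \<le> Some (B - int m)"
  unfolding alex_le_Some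
proof
  fix p assume "p \<in> Poly_Mapping.keys (Upow m c)"
  then obtain q where q: "q \<in> Poly_Mapping.keys c" "p = (fst q, snd q + m)" using keys_Upow by metis
  have "gr_el A q \<le> B" using assms q(1) by blast
  then show "gr_el A p \<le> B - int m" using q(2) by (simp add: gr_el_def)
qed

lemma alex_bdry_le:
  assumes "\<forall>w. \<forall>p\<in>Poly_Mapping.keys (d w). gr_el A p \<le> A w"
  shows "alex A (bdry d c) \<le> alex A c"
  unfolding bdry_def
proof (rule alex_lin_ext)
  fix p :: "'a \<times> nat"
  obtain w m where p: "p = (w, m)" by (cases p) simp
  show "alex A ((\<lambda>(w, m). Upow m (d w)) p) \<le> Some (gr_el A p)"
    using alex_Upow_shift[of "d w" A "A w" m] assms by (simp add: p gr_el_def)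
qed

lemma alex_restr_le: "alex A (restr P c) \<le> alex A c"
  unfolding restr_def
proof (rule alex_lin_ext)
  fix p :: "'a \<times> nat"
  show "alex A (if P p then Poly_Mapping.single p 1 else 0) \<le> Some (gr_el A p)" by simp
qed

lemma restr_single [simp]: "restr P (Poly_Mapping.single p 1) = (if P p then Poly_Mapping.single p 1 else 0)"
  by (simp add: restr_def)

lemma additive_restr: "additive (restr P)"
  unfolding restr_def by (rule additive_lin_ext)

lemma restr_vanish: "(\<And>p. p \<in> Poly_Mapping.keys c \<Longrightarrow> \<not> P p) \<Longrightarrow> restr P c = 0"
  unfolding restr_def by (rule lin_ext_vanish) auto

lemma horiz_restr: "horiz A d w = restr (\<lambda>p. gr_el A p = A w) (d w)"
  by (simp add: horiz_def restr_def lin_ext_def)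


lemma alex_plus_le: "alex A a \<le> X \<Longrightarrow> alex A b \<le> X \<Longrightarrow> alex A ((a::'g chain) + b) \<le> X"
  using alex_add[of A a b] by (simp add: order_trans)

lemma lin2_UNIV: "additive F \<Longrightarrow> lin2 UNIV UNIV F"
  by (simp add: lin2_def additive_def)

theorem lemma3p1:
  fixes A M :: "'g::finite \<Rightarrow> int" and d :: "'g \<Rightarrow> 'g chain"
    and N :: nat and x y :: "nat \<Rightarrow> 'g" and z :: 'g and r :: "nat \<Rightarrow> nat"
    and h1 \<pi> \<iota> D0 U D1 U1 f1 g1 :: "'g chain \<Rightarrow> 'g chain"
    and C1 :: "'g chain set" and A1 :: "'g chain \<Rightarrow> int option"
  assumes cplx: "knot_like_complex A M d"
    and hs: "horiz_simplified A d N x y z r"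
    and N1: "1 \<le> N"
    and h1_def: "h1 = h1_map (x 1) (y 1) (r 1)"
    and C1_def: "C1 = C1_set (x 1) (y 1) (r 1)"
    and \<pi>_def: "\<pi> = proj1 (x 1) (y 1) (r 1)"
    and \<iota>_def: "\<iota> = (\<lambda>c. c)"
    and D0_def: "D0 = bdry d"
    and U_def: "U = Upow 1"
    and D1_def: "D1 = (\<lambda>c. \<pi> (D0 (\<iota> c) + D0 (h1 (D0 (\<iota> c)))))"
    and U1_def: "U1 = (\<lambda>c. \<pi> (U (\<iota> c) + D0 (h1 (U (\<iota> c)))))"
    and A1_def: "A1 = (\<lambda>c. alex A (\<iota> c))"
    and f1_def: "f1 = (\<lambda>c. \<pi> (c + D0 (h1 c)))"
    and g1_def: "g1 = (\<lambda>c. \<iota> c + h1 (D0 (\<iota> c)))"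
  shows "ZU_deformation_retract UNIV D0 (alex A) U C1 D1 A1 U1 f1 g1"
proof -
  define x1 where "x1 = x 1"
  define y1 where "y1 = y 1"
  define r1 where "r1 = r 1"
  have one: "(1::nat) \<in> {1..N}" using N1 by simp
  have r1pos: "0 < r1" and hy: "horiz A d y1 = basis_el x1 r1"
    using hs one unfolding horiz_simplified_def x1_def y1_def r1_def by auto
  have xy: "x1 \<noteq> y1"
    using hs one unfolding horiz_simplified_def x1_def y1_def by blast
  have dd0: "\<And>w. bdry d (d w) = 0" and mas: "\<And>w p. p \<in> Poly_Mapping.keys (d w) \<Longrightarrow> maslov_el M p = M w - 1"
    and agr: "\<forall>w. \<forall>p\<in>Poly_Mapping.keys (d w). gr_el A p \<le> A w"
    using cplx unfolding knot_like_complex_def by auto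
  have "Poly_Mapping.lookup (horiz A d y1) (x1, r1) = 1" using hy by (simp add: basis_el_def)
  then have inkey: "(x1, r1) \<in> Poly_Mapping.keys (d y1)" and grx: "gr_el A (x1, r1) = A y1"
    by (auto simp: horiz_restr lookup_restr in_keys_iff split: if_splits)
  have Axy: "A y1 = A x1 - int r1" using grx by (simp add: gr_el_def)
  have mxr: "M x1 - 2 * int r1 = M y1 - 1" using mas[OF inkey] by (simp add: maslov_el_def)
  have keyx: "\<And>p. p \<in> Poly_Mapping.keys (d y1) \<Longrightarrow> fst p = x1 \<Longrightarrow> p = (x1, r1)"
  proof -
    fix p assume p: "p \<in> Poly_Mapping.keys (d y1)" "fst p = x1"
    have "M x1 - 2 * int (snd p) = M y1 - 1" using mas[OF p(1)] p(2) by (simp add: maslov_el_def)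
    then have "snd p = r1" using mxr by simp
    then show "p = (x1, r1)" using p(2) by (cases p) auto
  qed
  have keyy: "\<And>p. p \<in> Poly_Mapping.keys (d y1) \<Longrightarrow> fst p \<noteq> y1"
  proof
    fix p assume p: "p \<in> Poly_Mapping.keys (d y1)" "fst p = y1"
    have "M y1 - 2 * int (snd p) = M y1 - 1" using mas[OF p(1)] p(2) by (simp add: maslov_el_def)
    then show False by presburger
  qed
  define R where "R = d y1 + Poly_Mapping.single (x1, r1) 1"
  have dy: "d y1 = Poly_Mapping.single (x1, r1) 1 + R" unfolding R_def by (simp add: add.commute)
  have keyR: "\<And>p. p \<in> Poly_Mapping.keys R \<Longrightarrow> fst p \<noteq> x1 \<and> fst p \<noteq> y1"
  proof -
    fix p assume p: "p \<in> Poly_Mapping.keys R"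
    have l: "Poly_Mapping.lookup R p = Poly_Mapping.lookup (d y1) p + (if (x1, r1) = p then 1 else 0)"
      by (simp add: R_def lookup_add lookup_single when_def)
    show "fst p \<noteq> x1 \<and> fst p \<noteq> y1"
    proof (intro conjI notI)
      assume "fst p = x1"
      then have "Poly_Mapping.lookup R p = 0"
        using keyx[of p] inkey l bit_cases2[of "Poly_Mapping.lookup (d y1) p"] by (cases "p = (x1, r1)") (auto simp: in_keys_iff)
      then show False using p by (simp add: in_keys_iff)
    next
      assume a: "fst p = y1"
      then have "p \<notin> Poly_Mapping.keys (d y1)" using keyy by blast
      moreover have "p \<noteq> (x1, r1)" using a xy by auto
      ultimately have "Poly_Mapping.lookup R p = 0" using l by (simp add: in_keys_iff)
      then show False using p by (simp add: in_keys_iff)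
    qed
  qed
  have keyUR: "\<And>n p. p \<in> Poly_Mapping.keys (Upow n R) \<Longrightarrow> fst p \<noteq> x1 \<and> fst p \<noteq> y1"
  proof -
    fix n p assume "p \<in> Poly_Mapping.keys (Upow n R)"
    then obtain q where q: "q \<in> Poly_Mapping.keys R" "p = (fst q, snd q + n)" using keys_Upow by metis
    then show "fst p \<noteq> x1 \<and> fst p \<noteq> y1" using keyR[OF q(1)] by simp
  qed
  define \<rho>X where "\<rho>X = restr (\<lambda>p. fst p = x1 \<and> r1 \<le> snd p)"
  define \<rho>Y where "\<rho>Y = restr (\<lambda>p. fst p = y1)"
  have \<pi>_restr: "\<pi> = restr (\<lambda>p. p \<notin> excl1 x1 y1 r1)"
    unfolding \<pi>_def proj1_def restr_def x1_def y1_def r1_def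
    by (rule arg_cong[where f=lin_ext]) auto
  have h_single: "\<And>w m. h1 (Poly_Mapping.single (w, m) 1) = (if w = x1 \<and> r1 \<le> m then Poly_Mapping.single (y1, m - r1) 1 else 0)"
    by (simp add: h1_def h1_map_def x1_def y1_def r1_def basis_el_def)
  have aD: "additive D0" by (simp add: D0_def additive_bdry)
  have aH: "additive h1" by (simp add: h1_def h1_map_def additive_lin_ext)
  have aP: "additive \<pi>" by (simp add: \<pi>_restr additive_restr)
  have aX: "additive \<rho>X" by (simp add: \<rho>X_def additive_restr)
  have aY: "additive \<rho>Y" by (simp add: \<rho>Y_def additive_restr)
  have aU: "additive U" by (simp add: U_def additive_Upow)
  have hvan: "\<And>n. h1 (Upow n R) = 0"
    unfolding h1_def h1_map_def
    by (rule lin_ext_vanish) (use keyUR in \<open>auto simp: x1_def\<close>)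
  have Xvan: "\<And>n. \<rho>X (Upow n R) = 0"
    unfolding \<rho>X_def by (rule restr_vanish) (use keyUR in auto)
  have Yvan: "\<And>n. \<rho>Y (Upow n R) = 0"
    unfolding \<rho>Y_def by (rule restr_vanish) (use keyUR in auto)
  have Dy: "\<And>n. D0 (Poly_Mapping.single (y1, n) 1) = Poly_Mapping.single (x1, r1 + n) 1 + Upow n R"
    using aU by (simp add: D0_def dy additive_Upow[unfolded additive_def])
  have AD: "\<And>a b. D0 (a + b) = D0 a + D0 b" using aD by (simp add: additive_def)
  have AH: "\<And>a b. h1 (a + b) = h1 a + h1 b" using aH by (simp add: additive_def)
  have AP: "\<And>a b. \<pi> (a + b) = \<pi> a + \<pi> b" using aP by (simp add: additive_def)
  have AX: "\<And>a b. \<rho>X (a + b) = \<rho>X a + \<rho>X b" using aX by (simp add: additive_def)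
  have AY: "\<And>a b. \<rho>Y (a + b) = \<rho>Y a + \<rho>Y b" using aY by (simp add: additive_def)
  have AU: "\<And>a b. U (a + b) = U a + U b" using aU by (simp add: additive_def)
  have D00: "D0 0 = 0" and H00: "h1 0 = 0" and P00: "\<pi> 0 = 0" and X00: "\<rho>X 0 = 0" and Y00: "\<rho>Y 0 = 0" and U00: "U 0 = 0"
    using aD aH aP aX aY aU by (simp_all add: additive_zero)
  have UD: "\<And>c. U (D0 c) = D0 (U c)" by (simp add: U_def D0_def bdry_Upow)
  have PXY: "\<And>c. \<pi> c = c + \<rho>X c + \<rho>Y c"
  proof -
    fix c
    show "\<pi> c = c + \<rho>X c + \<rho>Y c"
    proof (rule poly_mapping_eqI)
      fix q :: "'g \<times> nat"
      show "Poly_Mapping.lookup (\<pi> c) q = Poly_Mapping.lookup (c + \<rho>X c + \<rho>Y c) q"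
        using xy by (cases q) (auto simp: \<pi>_restr \<rho>X_def \<rho>Y_def lookup_restr lookup_add excl1_def)
    qed
  qed
  have DD: "\<And>c. D0 (D0 c) = 0"
  proof -
    have eq: "(\<lambda>c. D0 (D0 c)) = (\<lambda>c. 0)"
    proof (rule additive_eqI2)
      show "additive (\<lambda>c. D0 (D0 c))" by (rule additive_comp[OF aD aD])
      show "additive (\<lambda>c. 0)" by (rule additive_0)
      fix w m
      show "(\<lambda>c. D0 (D0 c)) (Poly_Mapping.single (w, m) 1) = (\<lambda>c. 0) (Poly_Mapping.single (w, m) 1)"
        by (simp add: D0_def bdry_Upow dd0 additive_zero[OF additive_Upow])
    qed
    show "\<And>c. D0 (D0 c) = 0" using eq by (simp add: fun_eq_iff)
  qed
  have I3: "\<And>c. h1 (D0 (\<rho>Y c)) = \<rho>Y c"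
  proof -
    have eq: "(\<lambda>c. h1 (D0 (\<rho>Y c))) = (\<lambda>c. \<rho>Y c)"
    proof (rule additive_eqI2)
      show "additive (\<lambda>c. h1 (D0 (\<rho>Y c)))" by (rule additive_comp[OF aH additive_comp[OF aD aY]])
      show "additive (\<lambda>c. \<rho>Y c)" by (rule aY)
      fix w m
      show "(\<lambda>c. h1 (D0 (\<rho>Y c))) (Poly_Mapping.single (w, m) 1) = (\<lambda>c. \<rho>Y c) (Poly_Mapping.single (w, m) 1)"
        using xy r1pos by (auto simp: \<rho>X_def \<rho>Y_def \<pi>_restr additive_restr[unfolded additive_def] Xvan[unfolded \<rho>X_def] Yvan[unfolded \<rho>Y_def] Dy h_single hvan AD AH additive_zero[OF aD] additive_zero[OF aH] additive_zero[OF additive_restr] U_def excl1_def additive_zero[OF additive_Upow])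
    qed
    show "\<And>c. h1 (D0 (\<rho>Y c)) = \<rho>Y c" using eq by (simp add: fun_eq_iff)
  qed
  have I4: "\<And>c. \<rho>X (D0 (h1 c)) = \<rho>X c"
  proof -
    have eq: "(\<lambda>c. \<rho>X (D0 (h1 c))) = (\<lambda>c. \<rho>X c)"
    proof (rule additive_eqI2)
      show "additive (\<lambda>c. \<rho>X (D0 (h1 c)))" by (rule additive_comp[OF aX additive_comp[OF aD aH]])
      show "additive (\<lambda>c. \<rho>X c)" by (rule aX)
      fix w m
      show "(\<lambda>c. \<rho>X (D0 (h1 c))) (Poly_Mapping.single (w, m) 1) = (\<lambda>c. \<rho>X c) (Poly_Mapping.single (w, m) 1)"
        using xy r1pos by (auto simp: \<rho>X_def \<rho>Y_def \<pi>_restr additive_restr[unfolded additive_def] Xvan[unfolded \<rho>X_def] Yvan[unfolded \<rho>Y_def] Dy h_single hvan AD AH additive_zero[OF aD] additive_zero[OF aH] additive_zero[OF additive_restr] U_def excl1_def additive_zero[OF additive_Upow])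
    qed
    show "\<And>c. \<rho>X (D0 (h1 c)) = \<rho>X c" using eq by (simp add: fun_eq_iff)
  qed
  have I5: "\<And>c. \<rho>Y (D0 (h1 c)) = 0"
  proof -
    have eq: "(\<lambda>c. \<rho>Y (D0 (h1 c))) = (\<lambda>c. 0)"
    proof (rule additive_eqI2)
      show "additive (\<lambda>c. \<rho>Y (D0 (h1 c)))" by (rule additive_comp[OF aY additive_comp[OF aD aH]])
      show "additive (\<lambda>c. 0)" by (rule additive_0)
      fix w m
      show "(\<lambda>c. \<rho>Y (D0 (h1 c))) (Poly_Mapping.single (w, m) 1) = (\<lambda>c. 0) (Poly_Mapping.single (w, m) 1)"
        using xy r1pos by (auto simp: \<rho>X_def \<rho>Y_def \<pi>_restr additive_restr[unfolded additive_def] Xvan[unfolded \<rho>X_def] Yvan[unfolded \<rho>Y_def] Dy h_single hvan AD AH additive_zero[OF aD] additive_zero[OF aH] additive_zero[OF additive_restr] U_def excl1_def additive_zero[OF additive_Upow])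
    qed
    show "\<And>c. \<rho>Y (D0 (h1 c)) = 0" using eq by (simp add: fun_eq_iff)
  qed
  have I6: "\<And>c. \<rho>Y (h1 c) = h1 c"
  proof -
    have eq: "(\<lambda>c. \<rho>Y (h1 c)) = (\<lambda>c. h1 c)"
    proof (rule additive_eqI2)
      show "additive (\<lambda>c. \<rho>Y (h1 c))" by (rule additive_comp[OF aY aH])
      show "additive (\<lambda>c. h1 c)" by (rule aH)
      fix w m
      show "(\<lambda>c. \<rho>Y (h1 c)) (Poly_Mapping.single (w, m) 1) = (\<lambda>c. h1 c) (Poly_Mapping.single (w, m) 1)"
        using xy r1pos by (auto simp: \<rho>X_def \<rho>Y_def \<pi>_restr additive_restr[unfolded additive_def] Xvan[unfolded \<rho>X_def] Yvan[unfolded \<rho>Y_def] Dy h_single hvan AD AH additive_zero[OF aD] additive_zero[OF aH] additive_zero[OF additive_restr] U_def excl1_def additive_zero[OF additive_Upow])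
    qed
    show "\<And>c. \<rho>Y (h1 c) = h1 c" using eq by (simp add: fun_eq_iff)
  qed
  have I7: "\<And>c. h1 (h1 c) = 0"
  proof -
    have eq: "(\<lambda>c. h1 (h1 c)) = (\<lambda>c. 0)"
    proof (rule additive_eqI2)
      show "additive (\<lambda>c. h1 (h1 c))" by (rule additive_comp[OF aH aH])
      show "additive (\<lambda>c. 0)" by (rule additive_0)
      fix w m
      show "(\<lambda>c. h1 (h1 c)) (Poly_Mapping.single (w, m) 1) = (\<lambda>c. 0) (Poly_Mapping.single (w, m) 1)"
        using xy r1pos by (auto simp: \<rho>X_def \<rho>Y_def \<pi>_restr additive_restr[unfolded additive_def] Xvan[unfolded \<rho>X_def] Yvan[unfolded \<rho>Y_def] Dy h_single hvan AD AH additive_zero[OF aD] additive_zero[OF aH] additive_zero[OF additive_restr] U_def excl1_def additive_zero[OF additive_Upow])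
    qed
    show "\<And>c. h1 (h1 c) = 0" using eq by (simp add: fun_eq_iff)
  qed
  have I8: "\<And>c. \<pi> (h1 c) = 0"
  proof -
    have eq: "(\<lambda>c. \<pi> (h1 c)) = (\<lambda>c. 0)"
    proof (rule additive_eqI2)
      show "additive (\<lambda>c. \<pi> (h1 c))" by (rule additive_comp[OF aP aH])
      show "additive (\<lambda>c. 0)" by (rule additive_0)
      fix w m
      show "(\<lambda>c. \<pi> (h1 c)) (Poly_Mapping.single (w, m) 1) = (\<lambda>c. 0) (Poly_Mapping.single (w, m) 1)"
        using xy r1pos by (auto simp: \<rho>X_def \<rho>Y_def \<pi>_restr additive_restr[unfolded additive_def] Xvan[unfolded \<rho>X_def] Yvan[unfolded \<rho>Y_def] Dy h_single hvan AD AH additive_zero[OF aD] additive_zero[OF aH] additive_zero[OF additive_restr] U_def excl1_def additive_zero[OF additive_Upow])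
    qed
    show "\<And>c. \<pi> (h1 c) = 0" using eq by (simp add: fun_eq_iff)
  qed
  have I9: "\<And>c. h1 (\<pi> c) = 0"
  proof -
    have eq: "(\<lambda>c. h1 (\<pi> c)) = (\<lambda>c. 0)"
    proof (rule additive_eqI2)
      show "additive (\<lambda>c. h1 (\<pi> c))" by (rule additive_comp[OF aH aP])
      show "additive (\<lambda>c. 0)" by (rule additive_0)
      fix w m
      show "(\<lambda>c. h1 (\<pi> c)) (Poly_Mapping.single (w, m) 1) = (\<lambda>c. 0) (Poly_Mapping.single (w, m) 1)"
        using xy r1pos by (auto simp: \<rho>X_def \<rho>Y_def \<pi>_restr additive_restr[unfolded additive_def] Xvan[unfolded \<rho>X_def] Yvan[unfolded \<rho>Y_def] Dy h_single hvan AD AH additive_zero[OF aD] additive_zero[OF aH] additive_zero[OF additive_restr] U_def excl1_def additive_zero[OF additive_Upow])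
    qed
    show "\<And>c. h1 (\<pi> c) = 0" using eq by (simp add: fun_eq_iff)
  qed
  have I10: "\<And>c. \<pi> (U (h1 c)) = 0"
  proof -
    have eq: "(\<lambda>c. \<pi> (U (h1 c))) = (\<lambda>c. 0)"
    proof (rule additive_eqI2)
      show "additive (\<lambda>c. \<pi> (U (h1 c)))" by (rule additive_comp[OF aP additive_comp[OF aU aH]])
      show "additive (\<lambda>c. 0)" by (rule additive_0)
      fix w m
      show "(\<lambda>c. \<pi> (U (h1 c))) (Poly_Mapping.single (w, m) 1) = (\<lambda>c. 0) (Poly_Mapping.single (w, m) 1)"
        using xy r1pos by (auto simp: \<rho>X_def \<rho>Y_def \<pi>_restr additive_restr[unfolded additive_def] Xvan[unfolded \<rho>X_def] Yvan[unfolded \<rho>Y_def] Dy h_single hvan AD AH additive_zero[OF aD] additive_zero[OF aH] additive_zero[OF additive_restr] U_def excl1_def additive_zero[OF additive_Upow])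
    qed
    show "\<And>c. \<pi> (U (h1 c)) = 0" using eq by (simp add: fun_eq_iff)
  qed
  have I11: "\<And>c. h1 (U (h1 c)) = 0"
  proof -
    have eq: "(\<lambda>c. h1 (U (h1 c))) = (\<lambda>c. 0)"
    proof (rule additive_eqI2)
      show "additive (\<lambda>c. h1 (U (h1 c)))" by (rule additive_comp[OF aH additive_comp[OF aU aH]])
      show "additive (\<lambda>c. 0)" by (rule additive_0)
      fix w m
      show "(\<lambda>c. h1 (U (h1 c))) (Poly_Mapping.single (w, m) 1) = (\<lambda>c. 0) (Poly_Mapping.single (w, m) 1)"
        using xy r1pos by (auto simp: \<rho>X_def \<rho>Y_def \<pi>_restr additive_restr[unfolded additive_def] Xvan[unfolded \<rho>X_def] Yvan[unfolded \<rho>Y_def] Dy h_single hvan AD AH additive_zero[OF aD] additive_zero[OF aH] additive_zero[OF additive_restr] U_def excl1_def additive_zero[OF additive_Upow])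
    qed
    show "\<And>c. h1 (U (h1 c)) = 0" using eq by (simp add: fun_eq_iff)
  qed
  have HDH: "\<And>c. h1 (D0 (h1 c)) = h1 c"
  proof -
    fix c
    show "h1 (D0 (h1 c)) = h1 c" using I3[of "h1 c"] by (simp only: I6)
  qed
  have gdef: "\<And>c. g1 c = c + h1 (D0 c)" by (simp add: g1_def \<iota>_def)
  have fdef: "\<And>c. f1 c = \<pi> (c + D0 (h1 c))" by (simp add: f1_def)
  have D1def: "\<And>c. D1 c = \<pi> (D0 c + D0 (h1 (D0 c)))" by (simp add: D1_def \<iota>_def)
  have U1def: "\<And>c. U1 c = f1 (U c)" by (simp add: U1_def \<iota>_def fdef)
  have A1e: "A1 = alex A" by (simp add: A1_def \<iota>_def)
  have fDh0: "\<And>c. f1 (D0 (h1 c)) = 0" by (simp add: fdef HDH P00)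
  have fform: "\<And>c. f1 c = c + D0 (h1 c) + \<rho>Y c"
    by (simp add: fdef PXY AX AY AD I4 I5 add_ac)
  have F1: "\<And>c. g1 (f1 c) = c + D0 (h1 c) + h1 (D0 c)"
    by (simp add: gdef fform AD AH DD I3 D00 H00 add_ac)
  have F2: "\<And>c. D1 c = f1 (D0 (g1 c))"
    by (simp add: gdef fdef D1def AD AH DD HDH D00 H00)
  have F3: "\<And>c. f1 (D0 c) = D1 (f1 c)"
  proof -
    fix c
    have "D1 (f1 c) = f1 (D0 (g1 (f1 c)))" by (rule F2)
    also have "\<dots> = f1 (D0 c + D0 (h1 (D0 c)))" by (simp add: F1 AD DD D00)
    also have "\<dots> = f1 (D0 c)" using fDh0[of "D0 c"] aD aH aP by (simp add: fdef AD AH AP)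
    finally show "f1 (D0 c) = D1 (f1 c)" by simp
  qed
  have F4: "\<And>c. g1 (D1 c) = D0 (g1 c)"
  proof -
    fix c
    have "g1 (D1 c) = g1 (f1 (D0 (g1 c)))" by (simp add: F2)
    also have "\<dots> = D0 (g1 c) + D0 (h1 (D0 (g1 c)))" by (simp add: F1 DD H00)
    also have "h1 (D0 (g1 c)) = 0" by (simp add: gdef AD AH HDH)
    finally show "g1 (D1 c) = D0 (g1 c)" by (simp add: D00)
  qed
  have C1e: "C1 = {c. Poly_Mapping.keys c \<inter> excl1 x1 y1 r1 = {}}"
    by (simp add: C1_def C1_set_def x1_def y1_def r1_def)
  have PinC1: "\<And>c. \<pi> c \<in> C1" by (auto simp: C1e \<pi>_restr keys_restr)
  have PidC1: "\<And>c. c \<in> C1 \<Longrightarrow> \<pi> c = c"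
  proof -
    fix c assume "c \<in> C1"
    then have "\<And>q. q \<in> excl1 x1 y1 r1 \<Longrightarrow> Poly_Mapping.lookup c q = 0"
      by (auto simp: C1e in_keys_iff)
    then show "\<pi> c = c" by (intro poly_mapping_eqI) (auto simp: \<pi>_restr lookup_restr)
  qed
  have hC1: "\<And>c. c \<in> C1 \<Longrightarrow> h1 c = 0" using I9 PidC1 by metis
  have F5: "\<And>c. c \<in> C1 \<Longrightarrow> f1 (g1 c) = c"
  proof -
    fix c assume c: "c \<in> C1"
    have "f1 (g1 c) = \<pi> (c + h1 (D0 c) + D0 (h1 c + h1 (h1 (D0 c))))" by (simp add: fdef gdef AH)
    also have "\<dots> = c" using c by (simp add: hC1 I7 I8 AP PidC1 H00 D00)
    finally show "f1 (g1 c) = c" .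
  qed
  have F6: "\<And>c. f1 (U (h1 c)) = 0" by (simp add: fdef I10 I11 D00 P00)
  have F7: "\<And>c. f1 (U (g1 c)) = U1 c"
  proof -
    fix c
    have "f1 (U (g1 c)) = f1 (U c + U (h1 (D0 c)))" by (simp add: gdef AU)
    also have "\<dots> = f1 (U c) + f1 (U (h1 (D0 c)))" using aH aD aP by (simp add: fdef AD AH AP add_ac)
    finally show "f1 (U (g1 c)) = U1 c" by (simp add: F6 U1def)
  qed
  have Af: "\<And>a b. f1 (a + b) = f1 a + f1 b" by (simp add: fdef AD AH AP add_ac)
  have Ag: "\<And>a b. g1 (a + b) = g1 a + g1 b" by (simp add: gdef AD AH add_ac)
  have AD1: "\<And>a b. D1 (a + b) = D1 a + D1 b" by (simp add: D1def AD AH AP add_ac)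
  have AU1: "\<And>a b. U1 (a + b) = U1 a + U1 b" by (simp add: U1def AU Af)
  have f00: "f1 0 = 0" by (simp add: fdef D00 H00 P00)
  have D100: "D1 0 = 0" by (simp add: D1def D00 H00 P00)
  have F8: "\<And>c. f1 (U c) = U1 (f1 c)"
  proof -
    fix c
    have ceq: "c = g1 (f1 c) + D0 (h1 c) + h1 (D0 c)" by (simp add: F1 add_ac)
    have "f1 (U c) = f1 (U (g1 (f1 c) + D0 (h1 c) + h1 (D0 c)))"
      using ceq by (rule arg_cong[where f="\<lambda>x. f1 (U x)"])
    also have "\<dots> = f1 (U (g1 (f1 c))) + f1 (U (D0 (h1 c))) + f1 (U (h1 (D0 c)))" by (simp add: AU Af)
    also have "f1 (U (D0 (h1 c))) = 0" by (simp add: UD F3 F6 D100)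
    finally show "f1 (U c) = U1 (f1 c)" by (simp add: F7 F6)
  qed
  have F9: "\<And>c. g1 (U1 c) + U (g1 c) = D0 (h1 (U (g1 c))) + h1 (U (g1 (D1 c)))"
  proof -
    fix c
    define v where "v = U (g1 c)"
    have "v = g1 (f1 v) + D0 (h1 v) + h1 (D0 v)" by (simp add: F1 add_ac)
    also have "f1 v = U1 c" by (simp add: v_def F7)
    also have "D0 v = U (g1 (D1 c))" by (simp add: v_def UD F4)
    finally have "v = g1 (U1 c) + D0 (h1 v) + h1 (U (g1 (D1 c)))" .
    then have "v + g1 (U1 c) = (g1 (U1 c) + (D0 (h1 v) + h1 (U (g1 (D1 c))))) + g1 (U1 c)" by (simp add: add.assoc)
    then show "g1 (U1 c) + U (g1 c) = D0 (h1 (U (g1 c))) + h1 (U (g1 (D1 c)))"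
      by (simp add: v_def add_ac)
  qed
  have fD: "\<And>c. alex A (D0 c) \<le> alex A c" unfolding D0_def by (rule alex_bdry_le[OF agr])
  have fP: "\<And>c. alex A (\<pi> c) \<le> alex A c" unfolding \<pi>_restr by (rule alex_restr_le)
  have fU: "\<And>c. alex A (U c) \<le> alex A c" unfolding U_def by (rule alex_Upow_le)
  have fH: "\<And>c. alex A (h1 c) \<le> alex A c"
  proof -
    fix c
    show "alex A (h1 c) \<le> alex A c"
      unfolding h1_def h1_map_def
    proof (rule alex_lin_ext)
      fix p :: "'g \<times> nat"
      obtain w m where p: "p = (w, m)" by (cases p) simp
      show "alex A ((\<lambda>(w, m). if w = x 1 \<and> r 1 \<le> m then basis_el (y 1) (m - r 1) else 0) p) \<le> Some (gr_el A p)"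
        using Axy by (auto simp: p basis_el_def gr_el_def x1_def y1_def r1_def of_nat_diff)
    qed
  qed
  have DH: "\<And>c. alex A (D0 (h1 c)) \<le> alex A c" using fD fH by (rule order_trans)
  have ff: "\<And>c. alex A (f1 c) \<le> alex A c"
  proof -
    fix c
    have "alex A (c + D0 (h1 c)) \<le> alex A c" by (rule alex_plus_le[OF order_refl DH])
    then show "alex A (f1 c) \<le> alex A c" unfolding fdef by (rule order_trans[OF fP])
  qed
  have fg: "\<And>c. alex A (g1 c) \<le> alex A c"
  proof -
    fix c
    have "alex A (h1 (D0 c)) \<le> alex A c" using fH fD by (rule order_trans)
    then show "alex A (g1 c) \<le> alex A c" unfolding gdef by (rule alex_plus_le[OF order_refl])
  qed
  have fD1: "\<And>c. alex A (D1 c) \<le> alex A c"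
  proof -
    fix c
    have "alex A (D0 c + D0 (h1 (D0 c))) \<le> alex A (D0 c)" by (rule alex_plus_le[OF order_refl DH])
    then have "alex A (D0 c + D0 (h1 (D0 c))) \<le> alex A c" using fD by (rule order_trans)
    then show "alex A (D1 c) \<le> alex A c" unfolding D1def by (rule order_trans[OF fP])
  qed
  have fU1: "\<And>c. alex A (U1 c) \<le> alex A c"
    unfolding U1def using ff fU by (rule order_trans)
  have fK: "\<And>c. alex A (h1 (U (g1 c))) \<le> alex A c"
  proof -
    fix c
    have "alex A (U (g1 c)) \<le> alex A c" using fU fg by (rule order_trans)
    then show "alex A (h1 (U (g1 c))) \<le> alex A c" using fH order_trans by blast
  qed
  have zC1: "0 \<in> C1" by (simp add: C1e)
  have addC1: "\<And>a b. a \<in> C1 \<Longrightarrow> b \<in> C1 \<Longrightarrow> a + b \<in> C1"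
  proof -
    fix a b assume "a \<in> C1" "b \<in> C1"
    then show "a + b \<in> C1" using keys_add[of a b] by (auto simp: C1e)
  qed
  have Z0: "Z_filtration UNIV D0 (alex A)"
    unfolding Z_filtration_def by (intro conjI ballI) (rule alex_add, rule fD, simp add: alex_None_iff)
  have Z1: "Z_filtration C1 D1 (alex A)"
    unfolding Z_filtration_def by (intro conjI ballI) (rule alex_add, rule fD1, simp add: alex_None_iff)
  have cc0: "chain_complex UNIV D0"
    unfolding chain_complex_def subspace2_def lin2_def using AD DD by simp
  have DD1: "\<And>c. D1 (D1 c) = 0"
  proof -
    fix c
    have "D1 (D1 c) = D1 (f1 (D0 (g1 c)))" by (simp only: F2[of c])
    also have "\<dots> = f1 (D0 (D0 (g1 c)))" by (rule F3[symmetric])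
    finally show "D1 (D1 c) = 0" by (simp add: DD f00)
  qed
  have cc1: "chain_complex C1 D1"
    unfolding chain_complex_def subspace2_def lin2_def using zC1 addC1 AD1 DD1 by (simp add: D1def PinC1)
  have U0: "filtered_chain_map UNIV D0 (alex A) UNIV D0 (alex A) U"
    unfolding filtered_chain_map_def lin2_def filtered_map_def using AU fU UD by simp
  have U1D1: "\<And>c. U1 (D1 c) = D1 (U1 c)"
  proof -
    fix c
    define y where "y = D0 (g1 c)"
    have "U1 (D1 c) = f1 (U (f1 y))" by (simp add: U1def F2 y_def)
    also have "\<dots> = f1 (U y)" using F8[of y] by (simp add: U1def)
    also have "\<dots> = f1 (D0 (U (g1 c)))" by (simp add: y_def UD)
    also have "\<dots> = D1 (f1 (U (g1 c)))" by (rule F3)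
    also have "\<dots> = D1 (U1 c)" by (simp add: F7)
    finally show "U1 (D1 c) = D1 (U1 c)" .
  qed
  have U1c: "filtered_chain_map C1 D1 (alex A) C1 D1 (alex A) U1"
    unfolding filtered_chain_map_def lin2_def filtered_map_def using AU1 fU1 U1D1 by (simp add: U1def fdef PinC1)
  have fm: "filtered_chain_map UNIV D0 (alex A) C1 D1 (alex A) f1"
    unfolding filtered_chain_map_def lin2_def filtered_map_def using Af ff F3 by (simp add: fdef PinC1)
  have gm: "filtered_chain_map C1 D1 (alex A) UNIV D0 (alex A) g1"
    unfolding filtered_chain_map_def lin2_def filtered_map_def using Ag fg F4 by simp
  have ho: "\<exists>h. lin2 UNIV UNIV h \<and> filtered_map UNIV (alex A) (alex A) h \<and>
          (\<forall>x\<in>UNIV. g1 (f1 x) = x + D0 (h x) + h (D0 x))"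
    by (rule exI[of _ h1]) (simp add: lin2_UNIV[OF aH] filtered_map_def fH F1)
  have hom1: "filtered_homotopic UNIV D0 (alex A) C1 D1 (alex A) (\<lambda>x. f1 (U x)) (\<lambda>x. U1 (f1 x))"
    unfolding filtered_homotopic_def
    by (rule exI[of _ "\<lambda>_. 0"]) (simp add: lin2_def filtered_map_def zC1 F8 D100)
  have hom2: "filtered_homotopic C1 D1 (alex A) UNIV D0 (alex A) (\<lambda>x. g1 (U1 x)) (\<lambda>x. U (g1 x))"
    unfolding filtered_homotopic_def
    by (rule exI[of _ "\<lambda>c. h1 (U (g1 c))"]) (simp add: lin2_def filtered_map_def fK F9 AH AU Ag)
  show ?thesis
    unfolding ZU_deformation_retract_def ZU_filtered_complex_def A1e
    using cc0 Z0 U0 cc1 Z1 U1c fm gm F5 ho hom1 hom2 by (intro conjI) auto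
qed

end
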